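(* Let $f,g\in Sym$ be symmetric functions of degree at most a positive integer $n$. If $f[\Xi_\mu]=g[\Xi_\mu]$ for all partitions $\mu$ with $|\mu|\le n$, then $f=g$ in $Sym$.
   Context: $Sym=\mathbb{Q}[p_1,p_2,\ldots]$ graded by $\deg p_k=k$. For $f\in Sym$ and a partition $\mu$, $f[\Xi_\mu]$ denotes $f$ evaluated at the multiset of eigenvalues of a permutation matrix of cycle type $\mu$, i.e. $p_k\mapsto\sum_i\sum_{j=0}^{\mu_i-1}e^{2\pi i jk/\mu_i}=\sum_{d\mid k}d\,m_d(\mu)$, with $m_d(\mu)$ the number of parts of $\mu$ equal to $d$ (for $\mu$ the empty partition all $p_k\mapsto0$). *)

theory Defs
  imports Complex_Main "HOL-Library.Poly_Mapping" "HOL-Library.Multiset"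
begin

text \<open>Sym = Q[p_1,p_2,...] is represented as polynomials in countably many variables:
  a finitely supported map from monomials (finitely supported exponent vectors
  x) to rational coefficients. Variable index k stands for the
  power sum p_(k+1), so every variable is one of p_1, p_2, ...\<close>

type_synonym sym = "(nat \<Rightarrow>\<^sub>0 nat) \<Rightarrow>\<^sub>0 rat"

definition mon_deg :: "(nat \<Rightarrow>\<^sub>0 nat) \<Rightarrow> nat" where
  "mon_deg m = (\<Sum>k\<in>Poly_Mapping.keys m. Suc k * Poly_Mapping.lookup m k)"

definition sym_deg_le :: "sym \<Rightarrow> nat \<Rightarrow> bool" where
  "sym_deg_le f n \<longleftrightarrow> (\<forall>m\<in>Poly_Mapping.keys f. mon_deg m \<le> n)"

definition is_partition :: "nat multiset \<Rightarrow> bool" where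
  "is_partition \<mu> \<longleftrightarrow> (\<forall>x\<in>#\<mu>. 0 < x)"

definition pk_Xi :: "nat \<Rightarrow> nat multiset \<Rightarrow> rat" where
  "pk_Xi k \<mu> = (\<Sum>d | d dvd k \<and> 0 < d. of_nat (d * count \<mu> d))"

definition eval_Xi :: "sym \<Rightarrow> nat multiset \<Rightarrow> rat" where
  "eval_Xi f \<mu> = (\<Sum>m\<in>Poly_Mapping.keys f. Poly_Mapping.lookup f m * (\<Prod>k\<in>Poly_Mapping.keys m. pk_Xi (Suc k) \<mu> ^ Poly_Mapping.lookup m k))"

end

theory Submission
  imports Defs "HOL-Computational_Algebra.Polynomial"
begin

definition XX :: "nat multiset \<Rightarrow> nat \<Rightarrow> rat" where
  "XX \<mu> k = pk_Xi (Suc k) \<mu>"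

definition sh :: "nat \<Rightarrow> (nat \<Rightarrow> rat) \<Rightarrow> nat \<Rightarrow> rat" where
  "sh d x = (\<lambda>k. x k + (if d dvd Suc k then of_nat d else 0))"

definition Dl :: "nat \<Rightarrow> ((nat \<Rightarrow> rat) \<Rightarrow> rat) \<Rightarrow> (nat \<Rightarrow> rat) \<Rightarrow> rat" where
  "Dl d \<phi> = (\<lambda>x. \<phi> (sh d x) - \<phi> x)"

inductive Q :: "nat \<Rightarrow> ((nat \<Rightarrow> rat) \<Rightarrow> rat) \<Rightarrow> bool" where
  QI: "(\<And>d. 0 < d \<Longrightarrow> d \<le> N \<Longrightarrow> Q (N - d) (Dl d \<phi>))
       \<Longrightarrow> (\<And>d. N < d \<Longrightarrow> Dl d \<phi> = (\<lambda>_. 0)) \<Longrightarrow> Q N \<phi>"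

lemma XX_add:
  assumes "0 < e" shows "XX (add_mset e \<mu>) = sh e (XX \<mu>)"
proof
  fix k
  let ?D = "{d. d dvd Suc k \<and> 0 < d}"
  have fin: "finite ?D" by (rule finite_subset[of _ "{..Suc k}"]) (auto dest: dvd_imp_le)
  have "\<And>d. (of_nat (d * count (add_mset e \<mu>) d) :: rat) =
        of_nat (d * count \<mu> d) + (if d = e then of_nat e else 0)"
    by (auto simp: algebra_simps)
  then have "XX (add_mset e \<mu>) k = (\<Sum>d\<in>?D. of_nat (d * count \<mu> d)) + (\<Sum>d\<in>?D. (if d = e then of_nat e else 0))"
    by (simp add: XX_def pk_Xi_def sum.distrib)
  also have "(\<Sum>d\<in>?D. (if d = e then (of_nat e::rat) else 0)) = (if e dvd Suc k then of_nat e else 0)"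
    using fin assms by (simp add: sum.delta')
  finally show "XX (add_mset e \<mu>) k = sh e (XX \<mu>) k"
    by (simp add: sh_def XX_def pk_Xi_def)
qed

lemma Q_zero: "Q N (\<lambda>_. 0)"
proof (induction N rule: less_induct)
  case (less N)
  show ?case
    by (rule QI) (auto simp: Dl_def intro: less)
qed

lemma Q_const: "Q N (\<lambda>_. c)"
  by (rule QI) (auto simp: Dl_def intro: Q_zero)

lemma Dl_lin: "Dl d (\<lambda>x. a * \<phi> x + b * \<psi> x) = (\<lambda>x. a * Dl d \<phi> x + b * Dl d \<psi> x)"
  by (simp add: Dl_def algebra_simps)

lemma Q_lin: "Q N \<phi> \<Longrightarrow> Q N \<psi> \<Longrightarrow> Q N (\<lambda>x. a * \<phi> x + b * \<psi> x)"
proof (induction arbitrary: \<psi> rule: Q.induct)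
  case (QI N \<phi>)
  from QI.prems have B1: "\<And>d. 0 < d \<Longrightarrow> d \<le> N \<Longrightarrow> Q (N - d) (Dl d \<psi>)"
      and B2: "\<And>d. N < d \<Longrightarrow> Dl d \<psi> = (\<lambda>_. 0)" by (auto elim: Q.cases)
  show ?case
    proof (rule Q.QI)
      fix d assume "0 < d" "d \<le> N"
      then show "Q (N - d) (Dl d (\<lambda>x. a * \<phi> x + b * \<psi> x))"
        unfolding Dl_lin using QI.IH B1 by auto
    next
      fix d assume "N < d"
      then show "Dl d (\<lambda>x. a * \<phi> x + b * \<psi> x) = (\<lambda>_. 0)"
        unfolding Dl_lin using QI.hyps B2 by auto
    qed
qed

lemma Q_mono: "Q a \<phi> \<Longrightarrow> a \<le> b \<Longrightarrow> Q b \<phi>"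
proof (induction arbitrary: b rule: Q.induct)
  case (QI N \<phi>)
  show ?case
  proof (rule Q.QI)
    fix d assume d: "0 < d" "d \<le> b"
    show "Q (b - d) (Dl d \<phi>)"
    proof (cases "d \<le> N")
      case True then show ?thesis using QI d by auto
    next
      case False then show ?thesis using QI Q_zero by auto
    qed
  next
    fix d assume "b < d" then show "Dl d \<phi> = (\<lambda>_. 0)" using QI by auto
  qed
qed

lemma sh_comm: "sh d (sh e x) = sh e (sh d x)"
  by (auto simp: sh_def)

lemma Q_shift: "Q N \<phi> \<Longrightarrow> Q N (\<lambda>x. \<phi> (sh e x))"
proof (induction rule: Q.induct)
  case (QI N \<phi>)
  have eq: "Dl d (\<lambda>x. \<phi> (sh e x)) = (\<lambda>x. Dl d \<phi> (sh e x))" for d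
    by (simp add: Dl_def sh_comm)
  show ?case
  proof (rule Q.QI)
    fix d assume "0 < d" "d \<le> N" then show "Q (N - d) (Dl d (\<lambda>x. \<phi> (sh e x)))"
      unfolding eq using QI by auto
  next
    fix d assume "N < d" then show "Dl d (\<lambda>x. \<phi> (sh e x)) = (\<lambda>_. 0)"
      unfolding eq using QI.hyps(2) by auto
  qed
qed

lemma Q_add: "Q N \<phi> \<Longrightarrow> Q N \<psi> \<Longrightarrow> Q N (\<lambda>x. \<phi> x + \<psi> x)"
  using Q_lin[of N \<phi> \<psi> 1 1] by simp

lemma Q_scale: "Q N \<phi> \<Longrightarrow> Q N (\<lambda>x. a * \<phi> x)"
  using Q_lin[of N \<phi> "\<lambda>_. 0" a 0] Q_zero by simp

lemma Q_mult_aux: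
  "\<forall>a b \<phi> \<psi>. a + b = s \<longrightarrow> Q a \<phi> \<longrightarrow> Q b \<psi> \<longrightarrow> Q (a + b) (\<lambda>x. \<phi> x * \<psi> x)"
proof (induction s rule: less_induct)
  case (less s)
  show ?case
  proof (intro allI impI)
    fix a b \<phi> \<psi> assume s: "a + b = s" and qa: "Q a \<phi>" and qb: "Q b \<psi>"
    have eq: "Dl d (\<lambda>x. \<phi> x * \<psi> x) = (\<lambda>x. Dl d \<phi> x * \<psi> (sh d x) + \<phi> x * Dl d \<psi> x)" for d
      by (simp add: Dl_def algebra_simps)
    from qa have A1: "\<And>d. 0 < d \<Longrightarrow> d \<le> a \<Longrightarrow> Q (a - d) (Dl d \<phi>)"
      and A2: "\<And>d. a < d \<Longrightarrow> Dl d \<phi> = (\<lambda>_. 0)" by (auto elim: Q.cases)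
    from qb have B1: "\<And>d. 0 < d \<Longrightarrow> d \<le> b \<Longrightarrow> Q (b - d) (Dl d \<psi>)"
      and B2: "\<And>d. b < d \<Longrightarrow> Dl d \<psi> = (\<lambda>_. 0)" by (auto elim: Q.cases)
    show "Q (a + b) (\<lambda>x. \<phi> x * \<psi> x)"
    proof (rule Q.QI)
      fix d assume d: "0 < d" "d \<le> a + b"
      have T1: "Q (a + b - d) (\<lambda>x. Dl d \<phi> x * \<psi> (sh d x))"
      proof (cases "d \<le> a")
        case True
        have lt: "a - d + b < s" using s d True by simp
        have IH: "\<And>aa ba \<phi> \<psi>. aa + ba = a - d + b \<Longrightarrow> Q aa \<phi> \<Longrightarrow> Q ba \<psi> \<Longrightarrow> Q (aa + ba) (\<lambda>x. \<phi> x * \<psi> x)"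
          using less.IH[OF lt] by blast
        have "Q (a - d + b) (\<lambda>x. Dl d \<phi> x * \<psi> (sh d x))"
          using IH[OF refl A1[OF d(1) True] Q_shift[OF qb, of d]] .
        then show ?thesis using True by (simp add: add.commute add_diff_assoc2)
      next
        case False then show ?thesis using A2[of d] Q_zero by simp
      qed
      have T2: "Q (a + b - d) (\<lambda>x. \<phi> x * Dl d \<psi> x)"
      proof (cases "d \<le> b")
        case True
        have lt: "a + (b - d) < s" using s d True by simp
        have IH: "\<And>aa ba \<phi> \<psi>. aa + ba = a + (b - d) \<Longrightarrow> Q aa \<phi> \<Longrightarrow> Q ba \<psi> \<Longrightarrow> Q (aa + ba) (\<lambda>x. \<phi> x * \<psi> x)"
          using less.IH[OF lt] by blast
        have "Q (a + (b - d)) (\<lambda>x. \<phi> x * Dl d \<psi> x)"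
          using IH[OF refl qa B1[OF d(1) True]] .
        then show ?thesis using True by simp
      next
        case False then show ?thesis using B2[of d] Q_zero by simp
      qed
      show "Q (a + b - d) (Dl d (\<lambda>x. \<phi> x * \<psi> x))"
        unfolding eq by (rule Q_add[OF T1 T2])
    next
      fix d assume "a + b < d"
      then show "Dl d (\<lambda>x. \<phi> x * \<psi> x) = (\<lambda>_. 0)"
        unfolding eq using A2[of d] B2[of d] by simp
    qed
  qed
qed

lemma Q_mult: "Q a \<phi> \<Longrightarrow> Q b \<psi> \<Longrightarrow> Q (a + b) (\<lambda>x. \<phi> x * \<psi> x)"
  using Q_mult_aux by blast

lemma Q_var: "Q (Suc k) (\<lambda>x. x k)"
proof (rule QI)
  fix d assume "0 < d" "d \<le> Suc k"
  have "Dl d (\<lambda>x. x k) = (\<lambda>_. if d dvd Suc k then of_nat d else 0)"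
    by (simp add: Dl_def sh_def)
  then show "Q (Suc k - d) (Dl d (\<lambda>x. x k))" using Q_const by simp
next
  fix d assume "Suc k < d"
  then have "\<not> d dvd Suc k" by (auto dest: dvd_imp_le)
  then show "Dl d (\<lambda>x. x k) = (\<lambda>_. 0)" by (simp add: Dl_def sh_def)
qed

lemma Q_pow: "Q a \<phi> \<Longrightarrow> Q (a * j) (\<lambda>x. \<phi> x ^ j)"
proof (induction j)
  case 0 then show ?case using Q_const[of 0 1] by simp
next
  case (Suc j)
  then show ?case using Q_mult[of a \<phi> "a * j" "\<lambda>x. \<phi> x ^ j"] by simp
qed

lemma Q_prod: "finite A \<Longrightarrow> (\<And>i. i \<in> A \<Longrightarrow> Q (w i) (f i)) \<Longrightarrow> Q (\<Sum>i\<in>A. w i) (\<lambda>x. \<Prod>i\<in>A. f i x)"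
proof (induction A rule: finite_induct)
  case empty then show ?case using Q_const[of 0 1] by simp
next
  case (insert i A)
  then show ?case using Q_mult[of "w i" "f i" "\<Sum>i\<in>A. w i" "\<lambda>x. \<Prod>i\<in>A. f i x"] by simp
qed

lemma Q_sum: "finite A \<Longrightarrow> (\<And>i. i \<in> A \<Longrightarrow> Q N (f i)) \<Longrightarrow> Q N (\<lambda>x. \<Sum>i\<in>A. f i x)"
proof (induction A rule: finite_induct)
  case empty then show ?case using Q_zero by simp
next
  case (insert i A)
  then show ?case using Q_add[of N "f i" "\<lambda>x. \<Sum>i\<in>A. f i x"] by simp
qed

definition monr :: "nat \<Rightarrow> (nat \<Rightarrow> rat) \<Rightarrow> (nat \<Rightarrow>\<^sub>0 nat) \<Rightarrow> rat" where
  "monr r x m = (\<Prod>k<r. x k ^ Poly_Mapping.lookup m k)"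

lemma Q_monr: "Q (\<Sum>k<r. Suc k * Poly_Mapping.lookup m k) (\<lambda>x. monr r x m)"
  unfolding monr_def by (rule Q_prod) (auto intro: Q_pow[OF Q_var, simplified])

lemma vanish:
  "Q N \<phi> \<Longrightarrow> (\<forall>\<mu>. is_partition \<mu> \<and> sum_mset \<mu> \<le> N \<longrightarrow> \<phi> (XX \<mu>) = 0)
   \<Longrightarrow> \<forall>\<mu>. is_partition \<mu> \<longrightarrow> \<phi> (XX \<mu>) = 0"
proof (induction rule: Q.induct)
  case (QI N \<phi>)
  have step: "\<phi> (XX (add_mset d \<mu>)) = \<phi> (XX \<mu>)" if d: "0 < d" and p: "is_partition \<mu>" for d \<mu>
  proof (cases "d \<le> N")
    case True
    have "\<forall>\<nu>. is_partition \<nu> \<and> sum_mset \<nu> \<le> N - d \<longrightarrow> Dl d \<phi> (XX \<nu>) = 0"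
    proof (intro allI impI)
      fix \<nu> assume a: "is_partition \<nu> \<and> sum_mset \<nu> \<le> N - d"
      then have "is_partition (add_mset d \<nu>)" "sum_mset (add_mset d \<nu>) \<le> N"
        using d True by (auto simp: is_partition_def)
      then have "\<phi> (XX (add_mset d \<nu>)) = 0" "\<phi> (XX \<nu>) = 0" using QI.prems a by auto
      then show "Dl d \<phi> (XX \<nu>) = 0" using XX_add[OF d] by (simp add: Dl_def)
    qed
    then have "Dl d \<phi> (XX \<mu>) = 0" using QI.IH[OF d True] p by blast
    then show ?thesis using XX_add[OF d] by (simp add: Dl_def)
  next
    case False
    then have "Dl d \<phi> (XX \<mu>) = 0" using QI.hyps(2)[of d] by simp
    then show ?thesis using XX_add[OF d] by (simp add: Dl_def)
  qed
  show ?case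
  proof (intro allI impI)
    fix \<mu> :: "nat multiset" assume "is_partition \<mu>"
    then show "\<phi> (XX \<mu>) = 0"
    proof (induction \<mu>)
      case empty then show ?case using QI.prems by (simp add: is_partition_def)
    next
      case (add x \<mu>)
      then have "0 < x" "is_partition \<mu>" by (auto simp: is_partition_def)
      then show ?case using add step by simp
    qed
  qed
qed

lemma XX_rep:
  assumes "0 < e"
  shows "XX (\<mu> + replicate_mset t e) k = XX \<mu> k + (if e dvd Suc k then of_nat (e * t) else 0)"
proof (induction t)
  case 0 then show ?case by simp
next
  case (Suc t)
  have "XX (\<mu> + replicate_mset (Suc t) e) = sh e (XX (\<mu> + replicate_mset t e))"
    using XX_add[OF assms] by simp
  then show ?case using Suc by (simp add: sh_def algebra_simps)
qed

lemma P:
  "finite S \<Longrightarrow> (\<forall>m1\<in>S. \<forall>m2\<in>S. (\<forall>k<r. Poly_Mapping.lookup m1 k = Poly_Mapping.lookup m2 k) \<longrightarrow> m1 = m2)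
   \<Longrightarrow> (\<forall>\<mu>. is_partition \<mu> \<and> (\<forall>x\<in>#\<mu>. x \<le> r) \<longrightarrow> (\<Sum>m\<in>S. c m * monr r (XX \<mu>) m) = 0)
   \<Longrightarrow> m \<in> S \<Longrightarrow> c m = 0"
proof (induction r arbitrary: S m)
  case 0
  then have "S = {m}" by auto
  then show ?case using "0.prems"(3)[rule_format, of "{#}"] by (simp add: is_partition_def monr_def)
next
  case (Suc r)
  define j0 where "j0 = Poly_Mapping.lookup m r"
  define S0 where "S0 = {m'\<in>S. Poly_Mapping.lookup m' r = j0}"
  have finS0: "finite S0" using Suc.prems(1) by (simp add: S0_def)
  have mS0: "m \<in> S0" using Suc.prems(4) by (simp add: S0_def j0_def)
  have dist: "\<forall>m1\<in>S0. \<forall>m2\<in>S0. (\<forall>k<r. Poly_Mapping.lookup m1 k = Poly_Mapping.lookup m2 k) \<longrightarrow> m1 = m2"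
  proof (intro ballI impI)
    fix m1 m2 assume a: "m1 \<in> S0" "m2 \<in> S0" "\<forall>k<r. Poly_Mapping.lookup m1 k = Poly_Mapping.lookup m2 k"
    then have "\<forall>k<Suc r. Poly_Mapping.lookup m1 k = Poly_Mapping.lookup m2 k"
      by (auto simp: S0_def less_Suc_eq)
    then show "m1 = m2" using Suc.prems(2) a(1,2) by (auto simp: S0_def)
  qed
  have van: "\<forall>\<mu>. is_partition \<mu> \<and> (\<forall>x\<in>#\<mu>. x \<le> r) \<longrightarrow> (\<Sum>m\<in>S0. c m * monr r (XX \<mu>) m) = 0"
  proof (intro allI impI)
    fix \<mu> assume \<mu>: "is_partition \<mu> \<and> (\<forall>x\<in>#\<mu>. x \<le> r)"
    define p :: "rat poly" where
      "p = (\<Sum>m'\<in>S. monom (c m' * monr r (XX \<mu>) m') (Poly_Mapping.lookup m' r))"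
    have root: "poly p (XX \<mu> r + of_nat (Suc r * t)) = 0" for t
    proof -
      define \<nu> where "\<nu> = \<mu> + replicate_mset t (Suc r)"
      have "is_partition \<nu> \<and> (\<forall>x\<in>#\<nu>. x \<le> Suc r)"
        using \<mu> by (auto simp: \<nu>_def is_partition_def)
      then have z: "(\<Sum>m'\<in>S. c m' * monr (Suc r) (XX \<nu>) m') = 0" using Suc.prems(3) by blast
      have k1: "XX \<nu> k = XX \<mu> k" if "k < r" for k
      proof -
        have "\<not> Suc r dvd Suc k" using that by (auto dest: dvd_imp_le)
        then show ?thesis by (simp add: \<nu>_def XX_rep)
      qed
      have k2: "XX \<nu> r = XX \<mu> r + of_nat (Suc r * t)" by (simp add: \<nu>_def XX_rep)
      have "monr (Suc r) (XX \<nu>) m' = monr r (XX \<mu>) m' * (XX \<mu> r + of_nat (Suc r * t)) ^ Poly_Mapping.lookup m' r" for m'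
        unfolding monr_def using k1 k2 by simp
      then show ?thesis using z by (simp add: p_def poly_sum poly_monom mult.assoc)
    qed
    have "p = 0"
    proof (rule ccontr)
      assume "p \<noteq> 0"
      then have "finite {x. poly p x = 0}" by (rule poly_roots_finite)
      moreover have "range (\<lambda>t. XX \<mu> r + of_nat (Suc r * t)) \<subseteq> {x. poly p x = 0}"
        using root by auto
      moreover have "inj (\<lambda>t. XX \<mu> r + (of_nat (Suc r * t) :: rat))"
      proof (rule injI)
        fix x y assume "XX \<mu> r + (of_nat (Suc r * x) :: rat) = XX \<mu> r + of_nat (Suc r * y)"
        then have "Suc r * x = Suc r * y" by (simp only: add_left_cancel of_nat_eq_iff)
        then show "x = y" by (simp only: Suc_mult_cancel1)
      qed
      ultimately show False
        by (metis finite_subset range_inj_infinite)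
    qed
    then have "coeff p j0 = 0" by simp
    then have "(\<Sum>m'\<in>S. if Poly_Mapping.lookup m' r = j0 then c m' * monr r (XX \<mu>) m' else 0) = 0"
      by (simp add: p_def coeff_sum)
    then show "(\<Sum>m\<in>S0. c m * monr r (XX \<mu>) m) = 0"
      using Suc.prems(1) by (simp add: S0_def sum.inter_filter)
  qed
  show ?case using Suc.IH[OF finS0 dist van mS0] .
qed

lemma keys_bound:
  assumes "sym_deg_le f n" "m \<in> Poly_Mapping.keys f"
  shows "Poly_Mapping.keys m \<subseteq> {..<n}" "mon_deg m \<le> n"
proof -
  show "mon_deg m \<le> n" using assms by (simp add: sym_deg_le_def)
  show "Poly_Mapping.keys m \<subseteq> {..<n}"
  proof
    fix k assume k: "k \<in> Poly_Mapping.keys m"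
    then have "Suc k * Poly_Mapping.lookup m k \<le> mon_deg m"
      unfolding mon_deg_def by (rule member_le_sum) auto
    moreover have "Poly_Mapping.lookup m k \<ge> 1" using k by (simp add: in_keys_iff)
    ultimately have "Suc k \<le> n" using \<open>mon_deg m \<le> n\<close>
      by (metis le_trans mult.right_neutral mult_le_mono2)
    then show "k \<in> {..<n}" by simp
  qed
qed

lemma mon_deg_eq:
  assumes "Poly_Mapping.keys m \<subseteq> {..<n}"
  shows "mon_deg m = (\<Sum>k<n. Suc k * Poly_Mapping.lookup m k)"
  unfolding mon_deg_def
  by (rule sum.mono_neutral_left) (use assms in \<open>auto simp: in_keys_iff\<close>)

lemma monr_eq:
  assumes "Poly_Mapping.keys m \<subseteq> {..<n}"
  shows "(\<Prod>k\<in>Poly_Mapping.keys m. x k ^ Poly_Mapping.lookup m k) = monr n x m"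
  unfolding monr_def
  by (rule prod.mono_neutral_left) (use assms in \<open>auto simp: in_keys_iff\<close>)

lemma eval_eq:
  assumes "finite S" "Poly_Mapping.keys f \<subseteq> S" "sym_deg_le f n"
  shows "eval_Xi f \<mu> = (\<Sum>m\<in>S. Poly_Mapping.lookup f m * monr n (XX \<mu>) m)"
proof -
  have "eval_Xi f \<mu> = (\<Sum>m\<in>Poly_Mapping.keys f. Poly_Mapping.lookup f m * monr n (XX \<mu>) m)"
    unfolding eval_Xi_def
  proof (rule sum.cong)
    fix m assume "m \<in> Poly_Mapping.keys f"
    then show "Poly_Mapping.lookup f m * (\<Prod>k\<in>Poly_Mapping.keys m. pk_Xi (Suc k) \<mu> ^ Poly_Mapping.lookup m k)
       = Poly_Mapping.lookup f m * monr n (XX \<mu>) m"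
      using monr_eq[OF keys_bound(1)[OF assms(3)], of m "XX \<mu>"] by (simp add: XX_def)
  qed simp
  also have "\<dots> = (\<Sum>m\<in>S. Poly_Mapping.lookup f m * monr n (XX \<mu>) m)"
    by (rule sum.mono_neutral_left) (use assms in \<open>auto simp: in_keys_iff\<close>)
  finally show ?thesis .
qed

theorem proposition54:
  fixes f g :: sym and n :: nat
  assumes "0 < n"
    and "sym_deg_le f n" and "sym_deg_le g n"
    and "\<forall>\<mu>. is_partition \<mu> \<and> sum_mset \<mu> \<le> n \<longrightarrow> eval_Xi f \<mu> = eval_Xi g \<mu>"
  shows "f = g"
proof -
  define S where "S = Poly_Mapping.keys f \<union> Poly_Mapping.keys g"
  have finS: "finite S" by (simp add: S_def)
  define c where "c m = Poly_Mapping.lookup f m - Poly_Mapping.lookup g m" for m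
  have kS: "Poly_Mapping.keys m \<subseteq> {..<n} \<and> mon_deg m \<le> n" if "m \<in> S" for m
    using that keys_bound[OF assms(2)] keys_bound[OF assms(3)] by (auto simp: S_def)
  define \<phi> where "\<phi> x = (\<Sum>m\<in>S. c m * monr n x m)" for x
  have ev: "\<phi> (XX \<mu>) = eval_Xi f \<mu> - eval_Xi g \<mu>" for \<mu>
    using eval_eq[OF finS _ assms(2), of \<mu>] eval_eq[OF finS _ assms(3), of \<mu>]
    by (simp add: \<phi>_def c_def S_def sum_subtractf left_diff_distrib)
  have "Q n \<phi>"
    unfolding \<phi>_def
  proof (rule Q_sum[OF finS])
    fix m assume "m \<in> S"
    then have "(\<Sum>k<n. Suc k * Poly_Mapping.lookup m k) \<le> n"
      using kS[OF \<open>m \<in> S\<close>] mon_deg_eq[OF conjunct1[OF kS[OF \<open>m \<in> S\<close>]]] by simp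
    then show "Q n (\<lambda>x. c m * monr n x m)" by (intro Q_scale Q_mono[OF Q_monr])
  qed
  moreover have "\<forall>\<mu>. is_partition \<mu> \<and> sum_mset \<mu> \<le> n \<longrightarrow> \<phi> (XX \<mu>) = 0"
    using assms(4) ev by simp
  ultimately have all: "\<forall>\<mu>. is_partition \<mu> \<longrightarrow> \<phi> (XX \<mu>) = 0" by (rule vanish)
  have dist: "\<forall>m1\<in>S. \<forall>m2\<in>S. (\<forall>k<n. Poly_Mapping.lookup m1 k = Poly_Mapping.lookup m2 k) \<longrightarrow> m1 = m2"
  proof (intro ballI impI)
    fix m1 m2 assume a: "m1 \<in> S" "m2 \<in> S" "\<forall>k<n. Poly_Mapping.lookup m1 k = Poly_Mapping.lookup m2 k"
    show "m1 = m2"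
    proof (rule poly_mapping_eqI)
      fix k show "Poly_Mapping.lookup m1 k = Poly_Mapping.lookup m2 k"
      proof (cases "k < n")
        case True then show ?thesis using a by auto
      next
        case False
        then have "k \<notin> Poly_Mapping.keys m1" "k \<notin> Poly_Mapping.keys m2" using kS a by auto
        then show ?thesis by (simp add: in_keys_iff)
      qed
    qed
  qed
  have van: "\<forall>\<mu>. is_partition \<mu> \<and> (\<forall>x\<in>#\<mu>. x \<le> n) \<longrightarrow> (\<Sum>m\<in>S. c m * monr n (XX \<mu>) m) = 0"
    using all by (simp add: \<phi>_def)
  show "f = g"
  proof (rule poly_mapping_eqI)
    fix m show "Poly_Mapping.lookup f m = Poly_Mapping.lookup g m"
    proof (cases "m \<in> S")
      case True then show ?thesis using P[OF finS dist van True] by (simp add: c_def)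
    next
      case False then show ?thesis by (simp add: S_def in_keys_iff)
    qed
  qed
qed

end
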